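(* Let $n\ge1$ and let $(\xi_i,\mathcal{F}_i)_{i=0,\dots,n}$ be a sequence of real-valued martingale differences on $(\Omega,\mathcal{F},\mathbf{P})$ with $\xi_0=0$, $\{\emptyset,\Omega\}=\mathcal{F}_0\subseteq\cdots\subseteq\mathcal{F}_n\subseteq\mathcal{F}$ and $\mathbf{E}[\xi_i\mid\mathcal{F}_{i-1}]=0$. Let $S_k=\sum_{i=1}^k\xi_i$ and $\langle S\rangle_n=\sum_{i=1}^n\mathbf{E}[\xi_i^2\mid\mathcal{F}_{i-1}]$. Let $p\ge2$ and $\delta>0$, and assume $\mathbf{E}[|\xi_i|^{p+\delta}]<\infty$ for all $i\in[1,n]$. Then for all $x,v>0$, $$\mathbf{P}\Big(\max_{1\le k\le n}S_k\ge x\Big)\le\exp\Bigg\{-\frac{x^2}{2\big(nv^2+\frac13x^{(2p+\delta)/(p+\delta)}\big)}\Bigg\}+\frac{1}{x^p}\sum_{i=1}^n\mathbf{E}\Big[|\xi_i|^{p+\delta}\mathbf{1}_{\{\xi_i>x^{p/(p+\delta)}\}}\Big]+\frac{1}{v^{p+\delta}}\mathbf{E}\Big[\Big|\frac{\langle S\rangle_n}{n}\Big|^{(p+\delta)/2}\Big].$$ Moreover, $$\mathbf{E}\Big[\Big|\frac{\langle S\rangle_n}{n}\Big|^{(p+\delta)/2}\Big]\le\frac1n\sum_{i=1}^n\mathbf{E}\big[|\xi_i|^{p+\delta}\big].$$ *)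

theory Defs
  imports "HOL-Probability.Probability"
begin

end

theory Submission
  imports Defs
begin


lemma fact_ge_pow3: "2 * 3 ^ k \<le> (fact (k + 2) :: real)"
proof (induction k)
  case 0 then show ?case by (simp add: numeral_2_eq_2)
next
  case (Suc k)
  have "fact (Suc k + 2) = real (k + 3) * fact (k + 2)"
    by (simp add: fact_Suc numeral_3_eq_3 numeral_2_eq_2 algebra_simps)
  also have "\<dots> \<ge> 3 * fact (k+2)"
    by (intro mult_right_mono) auto
  finally have "3 * fact (k+2) \<le> (fact (Suc k + 2) :: real)" .
  moreover have "2 * 3 ^ Suc k = 3 * (2 * 3 ^ k :: real)" by simp
  ultimately show ?case using Suc by linarith
qed

lemma exp_bound_pos:
  fixes u :: real assumes "0 \<le> u" "u < 3"
  shows "exp u \<le> 1 + u + u\<^sup>2 / (2 * (1 - u/3))"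
proof -
  define b where "b k = (if k = 0 then 1 else if k = 1 then u else u\<^sup>2/2 * (u/3)^(k-2))" for k :: nat
  have g: "(\<lambda>k. u\<^sup>2/2 * (u/3)^k) sums (u\<^sup>2/2 * (1 / (1 - u/3)))"
    using assms by (intro sums_mult geometric_sums) auto
  have "(\<lambda>k. b (Suc (Suc k))) sums (u\<^sup>2/2 * (1 / (1 - u/3)))"
    using g by (simp add: b_def)
  then have "(\<lambda>k. b (Suc k)) sums (u\<^sup>2/2 * (1 / (1 - u/3)) + u)"
    by (subst (asm) sums_Suc_iff) (simp add: b_def)
  then have bs: "b sums (u\<^sup>2/2 * (1 / (1 - u/3)) + u + 1)"
    by (subst (asm) sums_Suc_iff) (simp add: b_def)
  have es: "(\<lambda>k. u^k / fact k) sums exp u"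
    using exp_converges[of u] by (simp add: divide_inverse_commute)
  have le: "u^k / fact k \<le> b k" for k
  proof (cases "k \<ge> 2")
    case True
    then obtain j where k: "k = j + 2" by (metis add.commute le_add_diff_inverse)
    have "u^k / fact k \<le> u^k / (2 * 3^j)"
      using assms fact_ge_pow3[of j] unfolding k
      by (intro divide_left_mono) auto
    also have "\<dots> = b k" unfolding k b_def
      by (simp add: power_add power_divide power2_eq_square)
    finally show ?thesis .
  next
    case False
    then have "k = 0 \<or> k = 1" by auto
    then show ?thesis by (auto simp: b_def)
  qed
  have "exp u \<le> u\<^sup>2/2 * (1 / (1 - u/3)) + u + 1"
    by (rule sums_le[OF _ es bs]) (use le in auto)
  then show ?thesis by simp
qed

lemma exp_bound_neg:
  fixes u :: real assumes "u \<le> 0"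
  shows "exp u \<le> 1 + u + u\<^sup>2 / 2"
proof -
  define f where "f t = 1 + t + t\<^sup>2/2 - exp t" for t :: real
  have d: "(f has_real_derivative (1 + t - exp t)) (at t)" for t
    unfolding f_def by (auto intro!: derivative_eq_intros simp: power2_eq_square)
  have "f 0 \<le> f u"
  proof (rule DERIV_nonpos_imp_nonincreasing[OF assms])
    fix t assume "u \<le> t" "t \<le> 0"
    show "\<exists>y. DERIV f t :> y \<and> y \<le> 0"
      using d[of t] exp_ge_add_one_self[of t] by auto
  qed
  then show ?thesis by (simp add: f_def)
qed

lemma exp_bern:
  fixes u a :: real assumes "u \<le> a" "0 \<le> a" "a < 3"
  shows "exp u \<le> 1 + u + u\<^sup>2 / (2 * (1 - a/3))"
proof (cases "u \<ge> 0")
  case True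
  have "exp u \<le> 1 + u + u\<^sup>2 / (2 * (1 - u/3))" using exp_bound_pos True assms by auto
  also have "\<dots> \<le> 1 + u + u\<^sup>2 / (2 * (1 - a/3))"
    using assms True by (intro add_left_mono divide_left_mono) auto
  finally show ?thesis .
next
  case False
  have "exp u \<le> 1 + u + u\<^sup>2 / 2" using exp_bound_neg False by auto
  also have "\<dots> \<le> 1 + u + u\<^sup>2 / (2 * (1 - a/3))"
    using assms by (intro add_left_mono divide_left_mono) auto
  finally show ?thesis .
qed



lemma powr_convex0:
  fixes a b t r :: real
  assumes "r \<ge> 1" "0 \<le> a" "0 \<le> b" "0 < t" "t < 1"
  shows "((1-t)*a + t*b) powr r \<le> (1-t) * a powr r + t * b powr r"
proof (cases "a = 0 \<or> b = 0")
  case False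
  then have "a > 0" "b > 0" using assms by auto
  then show ?thesis
    using convex_onD[OF powr_convex[OF assms(1)], of t a b] assms by auto
next
  case True
  then show ?thesis
  proof
    assume "a = 0"
    have "(t*b) powr r = t powr r * b powr r" using assms by (simp add: powr_mult)
    also have "\<dots> \<le> t * b powr r"
      using assms powr_le_one_le[of t r] by (intro mult_right_mono) auto
    finally show ?thesis using \<open>a = 0\<close> assms by simp
  next
    assume "b = 0"
    have "((1-t)*a) powr r = (1-t) powr r * a powr r" using assms by (simp add: powr_mult)
    also have "\<dots> \<le> (1-t) * a powr r"
      using assms powr_le_one_le[of "1-t" r] by (intro mult_right_mono) auto
    finally show ?thesis using \<open>b = 0\<close> assms by simp
  qed
qed

lemma abs_powr_convex:
  fixes r :: real assumes "r \<ge> 1"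
  shows "convex_on UNIV (\<lambda>x::real. \<bar>x\<bar> powr r)"
proof (rule convex_onI)
  fix t x y :: real assume t: "t > 0" "t < 1"
  have "\<bar>(1 - t) *\<^sub>R x + t *\<^sub>R y\<bar> powr r \<le> ((1-t)*\<bar>x\<bar> + t*\<bar>y\<bar>) powr r"
    using assms t by (intro powr_mono2) (auto intro: order.trans[OF abs_triangle_ineq] simp: abs_mult)
  also have "\<dots> \<le> (1-t) * \<bar>x\<bar> powr r + t * \<bar>y\<bar> powr r"
    using powr_convex0[OF assms _ _ t] by auto
  finally show "\<bar>(1 - t) *\<^sub>R x + t *\<^sub>R y\<bar> powr r \<le> (1 - t) * \<bar>x\<bar> powr r + t * \<bar>y\<bar> powr r" .
qed auto

lemma sq_abs_powr: "\<bar>(x::real)\<^sup>2\<bar> powr q = \<bar>x\<bar> powr (2*q)"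
proof -
  have "\<bar>x\<^sup>2\<bar> = \<bar>x\<bar> powr 2"
    by (cases "x = 0") (auto simp: powr_realpow[symmetric] power_abs)
  then have "\<bar>x\<^sup>2\<bar> powr q = (\<bar>x\<bar> powr 2) powr q" by (rule arg_cong)
  also have "\<dots> = \<bar>x\<bar> powr (2*q)" by (rule powr_powr)
  finally show ?thesis .
qed


locale mdsetup = prob_space M for M :: "'a measure" +
  fixes F :: "nat \<Rightarrow> 'a measure" and \<xi> :: "nat \<Rightarrow> 'a \<Rightarrow> real" and n :: nat
  assumes subalgF: "\<And>i. i \<le> n \<Longrightarrow> subalgebra M (F i)"
  and monoF: "\<And>i. i < n \<Longrightarrow> sets (F i) \<subseteq> sets (F (Suc i))"
  and adaptedF: "\<And>i. i \<le> n \<Longrightarrow> \<xi> i \<in> borel_measurable (F i)"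
  and integF: "\<And>i. i \<le> n \<Longrightarrow> integrable M (\<xi> i)"
  and sqF: "\<And>i. 1 \<le> i \<Longrightarrow> i \<le> n \<Longrightarrow> integrable M (\<lambda>\<omega>. (\<xi> i \<omega>)\<^sup>2)"
  and mdsF: "\<And>i. 1 \<le> i \<Longrightarrow> i \<le> n \<Longrightarrow> AE \<omega> in M. real_cond_exp M (F (i - 1)) (\<xi> i) \<omega> = 0"
begin

lemma spaceF: "i \<le> n \<Longrightarrow> space (F i) = space M"
  using subalgF[of i] by (simp add: subalgebra_def)

lemma setsF_mono: "i \<le> k \<Longrightarrow> k \<le> n \<Longrightarrow> sets (F i) \<subseteq> sets (F k)"
proof (induction k)
  case 0 then show ?case by simp
next
  case (Suc k)
  show ?case
  proof (cases "i = Suc k")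
    case False
    then have "sets (F i) \<subseteq> sets (F k)" using Suc by auto
    also have "\<dots> \<subseteq> sets (F (Suc k))" using monoF Suc by auto
    finally show ?thesis .
  qed simp
qed

lemma measF_mono: "i \<le> k \<Longrightarrow> k \<le> n \<Longrightarrow> f \<in> borel_measurable (F i) \<Longrightarrow> f \<in> borel_measurable (F k)"
  by (rule measurable_from_subalg[of "F k" "F i"]) (auto simp: subalgebra_def setsF_mono spaceF)

lemma measM: "i \<le> n \<Longrightarrow> f \<in> borel_measurable (F i) \<Longrightarrow> f \<in> borel_measurable M"
  by (rule measurable_from_subalg[OF subalgF])

lemma sfs: "i \<le> n \<Longrightarrow> sigma_finite_subalgebra M (F i)"
  by (intro finite_measure_subalgebra_is_sigma_finite)
     (simp add: finite_measure_subalgebra_def finite_measure_subalgebra_axioms_def subalgF finite_measure_axioms)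

lemma xi_meas: "i \<le> n \<Longrightarrow> \<xi> i \<in> borel_measurable M"
  using measM adaptedF by blast

definition cv :: "nat \<Rightarrow> 'a \<Rightarrow> real" where
  "cv i \<omega> = real_cond_exp M (F (i - 1)) (\<lambda>\<omega>'. (\<xi> i \<omega>')\<^sup>2) \<omega>"

lemma cv_measF: "1 \<le> i \<Longrightarrow> i \<le> n \<Longrightarrow> cv i \<in> borel_measurable (F (i - 1))"
  unfolding cv_def[abs_def] by simp

lemma cv_nonneg: "1 \<le> i \<Longrightarrow> i \<le> n \<Longrightarrow> AE \<omega> in M. cv i \<omega> \<ge> 0"
  unfolding cv_def
  by (rule sigma_finite_subalgebra.real_cond_exp_pos[OF sfs]) (auto intro: borel_measurable_power xi_meas)

lemma bmult:
  fixes f h :: "'a \<Rightarrow> real"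
  assumes "integrable M f" "h \<in> borel_measurable M" "\<And>\<omega>. \<omega> \<in> space M \<Longrightarrow> \<bar>h \<omega>\<bar> \<le> B"
  shows "integrable M (\<lambda>\<omega>. h \<omega> * f \<omega>)"
proof (rule Bochner_Integration.integrable_bound[where f="\<lambda>\<omega>. B * f \<omega>"])
  show "integrable M (\<lambda>\<omega>. B * f \<omega>)" using assms by auto
  show "(\<lambda>\<omega>. h \<omega> * f \<omega>) \<in> borel_measurable M" using assms borel_measurable_integrable by measurable
  show "AE \<omega> in M. norm (h \<omega> * f \<omega>) \<le> norm (B * f \<omega>)"
  proof (rule AE_I2)
    fix \<omega> assume w: "\<omega> \<in> space M"
    have "0 \<le> B" using assms(3)[OF w] by linarith
    then show "norm (h \<omega> * f \<omega>) \<le> norm (B * f \<omega>)"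
      using assms(3)[OF w] by (auto simp: abs_mult intro: mult_right_mono)
  qed
qed

lemma bint:
  fixes h :: "'a \<Rightarrow> real"
  assumes "h \<in> borel_measurable M" "\<And>\<omega>. \<omega> \<in> space M \<Longrightarrow> \<bar>h \<omega>\<bar> \<le> B"
  shows "integrable M h"
  by (rule integrable_const_bound[of _ B]) (use assms in auto)

lemma cv_int: "1 \<le> i \<Longrightarrow> i \<le> n \<Longrightarrow> integrable M (cv i)"
  unfolding cv_def[abs_def]
  by (rule sigma_finite_subalgebra.real_cond_exp_int(1)[OF sfs sqF]) auto

lemma QV_moment:
  assumes n: "n \<ge> 1" and q: "q \<ge> 1"
    and mom: "\<And>i. 1 \<le> i \<Longrightarrow> i \<le> n \<Longrightarrow> integrable M (\<lambda>\<omega>. \<bar>\<xi> i \<omega>\<bar> powr (2*q))"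
  shows "integrable M (\<lambda>\<omega>. \<bar>(\<Sum>i=1..n. cv i \<omega>) / real n\<bar> powr q)"
    and "(\<integral>\<omega>. \<bar>(\<Sum>i=1..n. cv i \<omega>) / real n\<bar> powr q \<partial>M) \<le> (1 / real n) * (\<Sum>i=1..n. \<integral>\<omega>. \<bar>\<xi> i \<omega>\<bar> powr (2*q) \<partial>M)"
proof -
  define e where "e i \<omega> = real_cond_exp M (F (i - 1)) (\<lambda>\<omega>. \<bar>\<xi> i \<omega>\<bar> powr (2*q)) \<omega>" for i \<omega>
  have e_int: "integrable M (e i)" "(\<integral>\<omega>. e i \<omega> \<partial>M) = (\<integral>\<omega>. \<bar>\<xi> i \<omega>\<bar> powr (2*q) \<partial>M)"
    if i: "1 \<le> i" "i \<le> n" for i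
    unfolding e_def[abs_def]
    using sigma_finite_subalgebra.real_cond_exp_int[OF sfs mom[OF i], of "i - 1"] i by auto
  have jen: "AE \<omega> in M. \<bar>cv i \<omega>\<bar> powr q \<le> e i \<omega>" if i: "1 \<le> i" "i \<le> n" for i
  proof -
    have fe: "(\<lambda>\<omega>. \<bar>(\<xi> i \<omega>)\<^sup>2\<bar> powr q) = (\<lambda>\<omega>. \<bar>\<xi> i \<omega>\<bar> powr (2*q))"
      by (simp only: sq_abs_powr)
    have "AE \<omega> in M. \<bar>real_cond_exp M (F (i - 1)) (\<lambda>\<omega>. (\<xi> i \<omega>)\<^sup>2) \<omega>\<bar> powr q
        \<le> real_cond_exp M (F (i - 1)) (\<lambda>\<omega>. \<bar>(\<xi> i \<omega>)\<^sup>2\<bar> powr q) \<omega>"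
    proof (rule sigma_finite_subalgebra.real_cond_exp_jensens_inequality(2)[OF sfs, where I=UNIV])
      show "i - 1 \<le> n" using i by auto
      show "integrable M (\<lambda>\<omega>. (\<xi> i \<omega>)\<^sup>2)" using sqF[OF i] .
      show "integrable M (\<lambda>\<omega>. \<bar>(\<xi> i \<omega>)\<^sup>2\<bar> powr q)" unfolding fe using mom[OF i] .
      show "convex_on UNIV (\<lambda>t::real. \<bar>t\<bar> powr q)" using abs_powr_convex q by auto
      show "(\<lambda>t::real. \<bar>t\<bar> powr q) \<in> borel_measurable borel" by measurable
    qed auto
    then show ?thesis unfolding cv_def e_def fe .
  qed
  have AEj: "AE \<omega> in M. \<forall>i\<in>{1..n}. \<bar>cv i \<omega>\<bar> powr q \<le> e i \<omega>"
    by (rule AE_finite_allI) (use jen in auto)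
  define R where "R \<omega> = (1 / real n) * (\<Sum>i=1..n. e i \<omega>)" for \<omega>
  have R_int: "integrable M R" unfolding R_def[abs_def]
    by (intro integrable_mult_right Bochner_Integration.integrable_sum) (use e_int in auto)
  have R_intg: "(\<integral>\<omega>. R \<omega> \<partial>M) = (1 / real n) * (\<Sum>i=1..n. \<integral>\<omega>. \<bar>\<xi> i \<omega>\<bar> powr (2*q) \<partial>M)"
    unfolding R_def[abs_def] using e_int by (simp add: integral_sum)
  have pw: "\<bar>(\<Sum>i=1..n. cv i \<omega>) / real n\<bar> powr q \<le> (1 / real n) * (\<Sum>i=1..n. \<bar>cv i \<omega>\<bar> powr q)" for \<omega>
  proof -
    have "(\<Sum>i=1..n. cv i \<omega>) / real n = (\<Sum>i\<in>{1..n}. (1 / real n) *\<^sub>R cv i \<omega>)"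
      by (simp add: sum_divide_distrib)
    moreover have "\<bar>\<Sum>i\<in>{1..n}. (1 / real n) *\<^sub>R cv i \<omega>\<bar> powr q \<le> (\<Sum>i\<in>{1..n}. (1 / real n) * \<bar>cv i \<omega>\<bar> powr q)"
      by (rule convex_on_sum[where C=UNIV and f="\<lambda>t. \<bar>t\<bar> powr q"]) (use n abs_powr_convex q in auto)
    ultimately show ?thesis by (simp add: sum_distrib_left)
  qed
  have AEle: "AE \<omega> in M. \<bar>(\<Sum>i=1..n. cv i \<omega>) / real n\<bar> powr q \<le> R \<omega>"
    using AEj
  proof (rule AE_mp, intro AE_I2 impI)
    fix \<omega> assume "\<forall>i\<in>{1..n}. \<bar>cv i \<omega>\<bar> powr q \<le> e i \<omega>"
    then have "(1 / real n) * (\<Sum>i=1..n. \<bar>cv i \<omega>\<bar> powr q) \<le> R \<omega>"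
      unfolding R_def by (intro mult_left_mono sum_mono) auto
    then show "\<bar>(\<Sum>i=1..n. cv i \<omega>) / real n\<bar> powr q \<le> R \<omega>" using pw[of \<omega>] by linarith
  qed
  have cvM[measurable]: "\<And>i. i \<in> {1..n} \<Longrightarrow> cv i \<in> borel_measurable M" using cv_int by auto
  have lM: "(\<lambda>\<omega>. \<bar>(\<Sum>i=1..n. cv i \<omega>) / real n\<bar> powr q) \<in> borel_measurable M"
    by measurable
  show li: "integrable M (\<lambda>\<omega>. \<bar>(\<Sum>i=1..n. cv i \<omega>) / real n\<bar> powr q)"
    by (rule Bochner_Integration.integrable_bound[OF R_int lM]) (use AEle in \<open>auto elim!: AE_mp\<close>)
  have "(\<integral>\<omega>. \<bar>(\<Sum>i=1..n. cv i \<omega>) / real n\<bar> powr q \<partial>M) \<le> (\<integral>\<omega>. R \<omega> \<partial>M)"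
    by (rule integral_mono_AE[OF li R_int AEle])
  then show "(\<integral>\<omega>. \<bar>(\<Sum>i=1..n. cv i \<omega>) / real n\<bar> powr q \<partial>M) \<le> (1 / real n) * (\<Sum>i=1..n. \<integral>\<omega>. \<bar>\<xi> i \<omega>\<bar> powr (2*q) \<partial>M)"
    using R_intg by simp
qed

context
  fixes lam y g :: real
  assumes lam: "lam > 0" and y: "y > 0" and g: "g \<ge> 0"
  and expb: "\<And>t. t \<le> y \<Longrightarrow> exp (lam * t) \<le> 1 + lam * t + g * t\<^sup>2"
begin

definition eta :: "nat \<Rightarrow> 'a \<Rightarrow> real" where "eta i \<omega> = (if \<xi> i \<omega> \<le> y then \<xi> i \<omega> else 0)"
definition dv :: "nat \<Rightarrow> 'a \<Rightarrow> real" where "dv i \<omega> = max 0 (cv i \<omega>)"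
definition Z :: "nat \<Rightarrow> 'a \<Rightarrow> real" where "Z k \<omega> = exp (\<Sum>i=1..k. lam * eta i \<omega> - g * dv i \<omega>)"

lemma eta_meas: "i \<le> k \<Longrightarrow> k \<le> n \<Longrightarrow> eta i \<in> borel_measurable (F k)"
proof -
  assume a: "i \<le> k" "k \<le> n"
  have [measurable]: "\<xi> i \<in> borel_measurable (F k)" using measF_mono[OF a adaptedF] a by auto
  show ?thesis unfolding eta_def[abs_def] by measurable
qed

lemma dv_meas: "1 \<le> i \<Longrightarrow> i - 1 \<le> k \<Longrightarrow> k \<le> n \<Longrightarrow> i \<le> n \<Longrightarrow> dv i \<in> borel_measurable (F k)"
proof -
  assume a: "1 \<le> i" "i - 1 \<le> k" "k \<le> n" "i \<le> n"
  have [measurable]: "cv i \<in> borel_measurable (F k)" using measF_mono[OF a(2,3) cv_measF[OF a(1,4)]] .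
  show ?thesis unfolding dv_def[abs_def] by measurable
qed

lemma Z_meas: "k \<le> n \<Longrightarrow> Z k \<in> borel_measurable (F k)"
proof -
  assume k: "k \<le> n"
  have "(\<lambda>\<omega>. \<Sum>i=1..k. lam * eta i \<omega> - g * dv i \<omega>) \<in> borel_measurable (F k)"
  proof (rule borel_measurable_sum)
    fix i assume i: "i \<in> {1..k}"
    have [measurable]: "eta i \<in> borel_measurable (F k)" "dv i \<in> borel_measurable (F k)"
      using eta_meas dv_meas i k by auto
    show "(\<lambda>\<omega>. lam * eta i \<omega> - g * dv i \<omega>) \<in> borel_measurable (F k)" by measurable
  qed
  then show ?thesis unfolding Z_def[abs_def] by measurable
qed

lemma Z_measM: "k \<le> n \<Longrightarrow> Z k \<in> borel_measurable M"
  using measM Z_meas by blast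

lemma Z_pos: "Z k \<omega> > 0" unfolding Z_def by simp

lemma eta_le: "eta i \<omega> \<le> y" using y unfolding eta_def by auto

lemma Z_bound: "Z k \<omega> \<le> exp (real k * (lam * y))"
proof -
  have "(\<Sum>i=1..k. lam * eta i \<omega> - g * dv i \<omega>) \<le> (\<Sum>i=1..k. lam * y)"
  proof (rule sum_mono)
    fix i
    have "lam * eta i \<omega> \<le> lam * y" using lam eta_le by (intro mult_left_mono) auto
    moreover have "g * dv i \<omega> \<ge> 0" using g by (simp add: dv_def)
    ultimately show "lam * eta i \<omega> - g * dv i \<omega> \<le> lam * y" by linarith
  qed
  then show ?thesis unfolding Z_def by simp
qed

lemma Z_Suc: "Z (Suc m) \<omega> = Z m \<omega> * exp (lam * eta (Suc m) \<omega>) * exp (- g * dv (Suc m) \<omega>)"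
  unfolding Z_def by (simp add: mult_exp_exp algebra_simps)

lemma dv_int: "1 \<le> i \<Longrightarrow> i \<le> n \<Longrightarrow> integrable M (dv i)"
proof -
  assume i: "1 \<le> i" "i \<le> n"
  have [measurable]: "cv i \<in> borel_measurable M" using cv_int[OF i] by auto
  show ?thesis unfolding dv_def[abs_def]
    by (rule Bochner_Integration.integrable_bound[OF cv_int[OF i]]) auto
qed

lemma KS:
  assumes m: "m < n" and G: "G \<in> sets (F m)"
  shows "(\<integral>\<omega>. Z (Suc m) \<omega> * indicator G \<omega> \<partial>M) \<le> (\<integral>\<omega>. Z m \<omega> * indicator G \<omega> \<partial>M)"
proof -
  define i where "i = Suc m"
  have i: "1 \<le> i" "i \<le> n" "i - 1 = m" using m by (auto simp: i_def)
  define B where "B = exp (real m * (lam * y))"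
  define h where "h \<omega> = Z m \<omega> * indicator G \<omega> * exp (- g * dv i \<omega>)" for \<omega>
  have GM: "G \<in> sets M" using G subalgF[of m] m by (auto simp: subalgebra_def)
  have [measurable]: "Z m \<in> borel_measurable (F m)" using Z_meas m by auto
  have [measurable]: "dv i \<in> borel_measurable (F m)" using dv_meas[of i m] i by auto
  have hF[measurable]: "h \<in> borel_measurable (F m)" unfolding h_def[abs_def] using G by measurable
  have hM[measurable]: "h \<in> borel_measurable M" using measM[OF _ hF] m by auto
  have h_nn: "0 \<le> h \<omega>" for \<omega> unfolding h_def using Z_pos[of m \<omega>] by (auto simp: indicator_def)
  have h_le: "h \<omega> \<le> B" for \<omega>
  proof -
    have "exp (- g * dv i \<omega>) \<le> 1" using g by (auto simp: dv_def)
    then have "h \<omega> \<le> Z m \<omega> * 1 * 1" unfolding h_def using Z_pos[of m \<omega>]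
      by (intro mult_mono) (auto simp: indicator_def)
    then show ?thesis using Z_bound[of m \<omega>] by (simp add: B_def)
  qed
  have habs: "\<bar>h \<omega>\<bar> \<le> B" for \<omega> using h_nn h_le by auto
  have xiM[measurable]: "\<xi> i \<in> borel_measurable M" using xi_meas i by auto
  have xi2M[measurable]: "(\<lambda>\<omega>. (\<xi> i \<omega>)\<^sup>2) \<in> borel_measurable M" by measurable
  have etaM[measurable]: "eta i \<in> borel_measurable M" using eta_meas[of i i] i measM by blast
  have dvM[measurable]: "dv i \<in> borel_measurable M" using dv_int[OF i(1,2)] by auto
  have sf: "sigma_finite_subalgebra M (F m)" using sfs m by auto
  have int_hxi: "integrable M (\<lambda>\<omega>. h \<omega> * \<xi> i \<omega>)" by (rule bmult[OF integF[OF i(2)] hM habs])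
  have int_hxi2: "integrable M (\<lambda>\<omega>. h \<omega> * (\<xi> i \<omega>)\<^sup>2)" by (rule bmult[OF sqF[OF i(1,2)] hM habs])
  have int_hdv: "integrable M (\<lambda>\<omega>. h \<omega> * dv i \<omega>)" by (rule bmult[OF dv_int[OF i(1,2)] hM habs])
  have int_h: "integrable M h" by (rule bint[OF hM habs])
  have E1: "(\<integral>\<omega>. h \<omega> * \<xi> i \<omega> \<partial>M) = 0"
  proof -
    have "(\<integral>\<omega>. h \<omega> * \<xi> i \<omega> \<partial>M) = (\<integral>\<omega>. h \<omega> * real_cond_exp M (F m) (\<xi> i) \<omega> \<partial>M)"
      by (rule sigma_finite_subalgebra.real_cond_exp_intg(2)[OF sf int_hxi hF xiM, symmetric])
    also have "\<dots> = (\<integral>\<omega>. 0 \<partial>M)"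
      by (rule integral_cong_AE) (use mdsF[OF i(1,2)] i(3) in auto)
    finally show ?thesis by simp
  qed
  have E2: "(\<integral>\<omega>. h \<omega> * (\<xi> i \<omega>)\<^sup>2 \<partial>M) \<le> (\<integral>\<omega>. h \<omega> * dv i \<omega> \<partial>M)"
  proof -
    have "(\<integral>\<omega>. h \<omega> * (\<xi> i \<omega>)\<^sup>2 \<partial>M) = (\<integral>\<omega>. h \<omega> * cv i \<omega> \<partial>M)"
      unfolding cv_def using i(3)
      by (simp add: sigma_finite_subalgebra.real_cond_exp_intg(2)[OF sf int_hxi2 hF xi2M])
    also have "\<dots> \<le> (\<integral>\<omega>. h \<omega> * dv i \<omega> \<partial>M)"
    proof (rule integral_mono)
      show "integrable M (\<lambda>\<omega>. h \<omega> * cv i \<omega>)" by (rule bmult[OF cv_int[OF i(1,2)] hM habs])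
      show "integrable M (\<lambda>\<omega>. h \<omega> * dv i \<omega>)" by (rule int_hdv)
      fix \<omega> show "h \<omega> * cv i \<omega> \<le> h \<omega> * dv i \<omega>"
        using h_nn[of \<omega>] by (intro mult_left_mono) (auto simp: dv_def)
    qed
    finally show ?thesis .
  qed
  have pw1: "Z (Suc m) \<omega> * indicator G \<omega> = h \<omega> * exp (lam * eta i \<omega>)" for \<omega>
    unfolding h_def i_def Z_Suc by simp
  have pw2: "Z m \<omega> * indicator G \<omega> = h \<omega> * exp (g * dv i \<omega>)" for \<omega>
    unfolding h_def by (simp add: exp_minus field_simps)
  have pw3: "h \<omega> * exp (lam * eta i \<omega>) \<le> h \<omega> + lam * (h \<omega> * \<xi> i \<omega>) + g * (h \<omega> * (\<xi> i \<omega>)\<^sup>2)" for \<omega>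
  proof -
    have "exp (lam * eta i \<omega>) \<le> 1 + lam * \<xi> i \<omega> + g * (\<xi> i \<omega>)\<^sup>2"
    proof (cases "\<xi> i \<omega> \<le> y")
      case True then show ?thesis using expb[of "\<xi> i \<omega>"] by (simp add: eta_def)
    next
      case False
      then have "\<xi> i \<omega> > 0" using y by auto
      then show ?thesis using False lam g by (simp add: eta_def)
    qed
    then have "h \<omega> * exp (lam * eta i \<omega>) \<le> h \<omega> * (1 + lam * \<xi> i \<omega> + g * (\<xi> i \<omega>)\<^sup>2)"
      using h_nn by (intro mult_left_mono) auto
    then show ?thesis by (simp add: algebra_simps)
  qed
  have pw4: "h \<omega> + g * (h \<omega> * dv i \<omega>) \<le> h \<omega> * exp (g * dv i \<omega>)" for \<omega>
  proof -
    have "h \<omega> * (1 + g * dv i \<omega>) \<le> h \<omega> * exp (g * dv i \<omega>)"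
      using h_nn exp_ge_add_one_self[of "g * dv i \<omega>"] by (intro mult_left_mono) auto
    then show ?thesis by (simp add: algebra_simps)
  qed
  have int_Z1: "integrable M (\<lambda>\<omega>. h \<omega> * exp (lam * eta i \<omega>))"
  proof (rule bint[where B="exp (real (Suc m) * (lam * y))"])
    show "(\<lambda>\<omega>. h \<omega> * exp (lam * eta i \<omega>)) \<in> borel_measurable M" by measurable
    fix \<omega>
    have "\<bar>h \<omega> * exp (lam * eta i \<omega>)\<bar> = Z (Suc m) \<omega> * indicator G \<omega>"
      using pw1[of \<omega>] h_nn[of \<omega>] by simp
    also have "\<dots> \<le> Z (Suc m) \<omega>" using Z_pos[of "Suc m" \<omega>] by (auto simp: indicator_def)
    finally show "\<bar>h \<omega> * exp (lam * eta i \<omega>)\<bar> \<le> exp (real (Suc m) * (lam * y))"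
      using Z_bound[of "Suc m" \<omega>] by linarith
  qed
  have int_Z0: "integrable M (\<lambda>\<omega>. h \<omega> * exp (g * dv i \<omega>))"
  proof (rule bint[where B="exp (real m * (lam * y))"])
    show "(\<lambda>\<omega>. h \<omega> * exp (g * dv i \<omega>)) \<in> borel_measurable M" by measurable
    fix \<omega>
    have "\<bar>h \<omega> * exp (g * dv i \<omega>)\<bar> = Z m \<omega> * indicator G \<omega>"
      using pw2[of \<omega>] h_nn[of \<omega>] by simp
    also have "\<dots> \<le> Z m \<omega>" using Z_pos[of m \<omega>] by (auto simp: indicator_def)
    finally show "\<bar>h \<omega> * exp (g * dv i \<omega>)\<bar> \<le> exp (real m * (lam * y))"
      using Z_bound[of m \<omega>] by linarith
  qed
  have "(\<integral>\<omega>. Z (Suc m) \<omega> * indicator G \<omega> \<partial>M) = (\<integral>\<omega>. h \<omega> * exp (lam * eta i \<omega>) \<partial>M)"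
    by (simp add: pw1)
  also have "\<dots> \<le> (\<integral>\<omega>. h \<omega> + lam * (h \<omega> * \<xi> i \<omega>) + g * (h \<omega> * (\<xi> i \<omega>)\<^sup>2) \<partial>M)"
    by (rule integral_mono[OF int_Z1 _ pw3]) (use int_h int_hxi int_hxi2 in auto)
  also have "\<dots> = (\<integral>\<omega>. h \<omega> \<partial>M) + lam * (\<integral>\<omega>. h \<omega> * \<xi> i \<omega> \<partial>M) + g * (\<integral>\<omega>. h \<omega> * (\<xi> i \<omega>)\<^sup>2 \<partial>M)"
    using int_h int_hxi int_hxi2 by simp
  also have "\<dots> \<le> (\<integral>\<omega>. h \<omega> \<partial>M) + g * (\<integral>\<omega>. h \<omega> * dv i \<omega> \<partial>M)"
    using E1 E2 g by (simp add: mult_left_mono)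
  also have "\<dots> = (\<integral>\<omega>. h \<omega> + g * (h \<omega> * dv i \<omega>) \<partial>M)"
    using int_h int_hdv by simp
  also have "\<dots> \<le> (\<integral>\<omega>. h \<omega> * exp (g * dv i \<omega>) \<partial>M)"
    by (rule integral_mono[OF _ int_Z0 pw4]) (use int_h int_hdv in auto)
  also have "\<dots> = (\<integral>\<omega>. Z m \<omega> * indicator G \<omega> \<partial>M)"
    by (simp add: pw2)
  finally show ?thesis .
qed

context
  fixes c :: real assumes c: "c > 0"
begin

definition Gs :: "nat \<Rightarrow> 'a set" where "Gs m = {\<omega> \<in> space M. \<forall>j\<in>{1..m}. Z j \<omega> < c}"

lemma Gs_sets: "m \<le> n \<Longrightarrow> Gs m \<in> sets (F m)"
proof -
  assume m: "m \<le> n"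
  have "Measurable.pred (F m) (\<lambda>\<omega>. \<forall>j\<in>{1..m}. Z j \<omega> < c)"
  proof (rule pred_intros_finite)
    fix j assume j: "j \<in> {1..m}"
    have [measurable]: "Z j \<in> borel_measurable (F m)" using measF_mono[OF _ m Z_meas] j m by auto
    show "Measurable.pred (F m) (\<lambda>\<omega>. Z j \<omega> < c)" by measurable
  qed auto
  then show ?thesis unfolding Gs_def pred_def using spaceF[OF m] by simp
qed

lemma Gs_setsM: "m \<le> n \<Longrightarrow> Gs m \<in> sets M"
  using Gs_sets subalgF by (auto simp: subalgebra_def)

definition Psi :: "nat \<Rightarrow> real" where
  "Psi m = (\<integral>\<omega>. c * indicator (space M - Gs m) \<omega> + Z m \<omega> * indicator (Gs m) \<omega> \<partial>M)"

lemma int_ind: "A \<in> sets M \<Longrightarrow> integrable M (\<lambda>\<omega>. c * indicator A \<omega>)"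
  by (rule bint[where B=c]) (use c in \<open>auto simp: indicator_def\<close>)

lemma int_Zind: "m \<le> n \<Longrightarrow> A \<in> sets M \<Longrightarrow> integrable M (\<lambda>\<omega>. Z m \<omega> * indicator A \<omega>)"
proof (rule bint[where B="exp (real m * (lam * y))"])
  assume "m \<le> n" "A \<in> sets M"
  then have [measurable]: "Z m \<in> borel_measurable M" "A \<in> sets M" using Z_measM by auto
  show "(\<lambda>\<omega>. Z m \<omega> * indicator A \<omega>) \<in> borel_measurable M" by measurable
  fix \<omega> show "\<bar>Z m \<omega> * indicator A \<omega>\<bar> \<le> exp (real m * (lam * y))"
    using Z_pos[of m \<omega>] Z_bound[of m \<omega>] by (auto simp: indicator_def)
qed

lemma Psi_le: "m \<le> n \<Longrightarrow> Psi m \<le> 1"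
proof (induction m)
  case 0
  have "Gs 0 = space M" by (simp add: Gs_def)
  moreover have "Z 0 \<omega> = 1" for \<omega> by (simp add: Z_def)
  ultimately have "Psi 0 = (\<integral>\<omega>. indicator (space M) \<omega> \<partial>M)" by (simp add: Psi_def)
  also have "\<dots> = 1" by (simp add: prob_space)
  finally show ?case by simp
next
  case (Suc m)
  have m: "m < n" "m \<le> n" using Suc by auto
  have sub: "Gs (Suc m) \<subseteq> Gs m" by (auto simp: Gs_def)
  have [measurable]: "Gs m \<in> sets M" "Gs (Suc m) \<in> sets M" using Gs_setsM Suc m by auto
  have pw: "c * indicator (space M - Gs (Suc m)) \<omega> + Z (Suc m) \<omega> * indicator (Gs (Suc m)) \<omega>
      \<le> c * indicator (space M - Gs m) \<omega> + Z (Suc m) \<omega> * indicator (Gs m) \<omega>" if w: "\<omega> \<in> space M" for \<omega>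
  proof (cases "\<omega> \<in> Gs m")
    case False
    then have "\<omega> \<notin> Gs (Suc m)" using sub by auto
    then show ?thesis using False w by (auto simp: indicator_def)
  next
    case True
    show ?thesis
    proof (cases "\<omega> \<in> Gs (Suc m)")
      case True then show ?thesis using sub by (auto simp: indicator_def)
    next
      case False
      then have "Z (Suc m) \<omega> \<ge> c" using \<open>\<omega> \<in> Gs m\<close> w by (auto simp: Gs_def le_Suc_eq)
      then show ?thesis using False \<open>\<omega> \<in> Gs m\<close> w by (auto simp: indicator_def)
    qed
  qed
  have "Psi (Suc m) \<le> (\<integral>\<omega>. c * indicator (space M - Gs m) \<omega> + Z (Suc m) \<omega> * indicator (Gs m) \<omega> \<partial>M)"
    unfolding Psi_def
    by (rule integral_mono) (use pw int_ind int_Zind Suc m in auto)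
  also have "\<dots> = (\<integral>\<omega>. c * indicator (space M - Gs m) \<omega> \<partial>M) + (\<integral>\<omega>. Z (Suc m) \<omega> * indicator (Gs m) \<omega> \<partial>M)"
    by (rule Bochner_Integration.integral_add) (use int_ind int_Zind Suc m in auto)
  also have "\<dots> \<le> (\<integral>\<omega>. c * indicator (space M - Gs m) \<omega> \<partial>M) + (\<integral>\<omega>. Z m \<omega> * indicator (Gs m) \<omega> \<partial>M)"
    using KS[OF m(1) Gs_sets[OF m(2)]] by simp
  also have "\<dots> = Psi m"
    unfolding Psi_def
    by (rule Bochner_Integration.integral_add[symmetric]) (use int_ind int_Zind Suc m in auto)
  finally show ?case using Suc m by simp
qed

lemma maximal: "c * measure M (space M - Gs n) \<le> 1"
proof -
  have [measurable]: "Gs n \<in> sets M" using Gs_setsM by auto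
  have "c * measure M (space M - Gs n) = (\<integral>\<omega>. c * indicator (space M - Gs n) \<omega> \<partial>M)"
    by simp
  also have "\<dots> \<le> Psi n" unfolding Psi_def
  proof (rule integral_mono)
    have i1: "integrable M (\<lambda>\<omega>. c * indicator (space M - Gs n) \<omega>)" using int_ind by auto
    have i2: "integrable M (\<lambda>\<omega>. Z n \<omega> * indicator (Gs n) \<omega>)" using int_Zind by auto
    show "integrable M (\<lambda>\<omega>. c * indicator (space M - Gs n) \<omega>)" by (rule i1)
    show "integrable M (\<lambda>\<omega>. c * indicator (space M - Gs n) \<omega> + Z n \<omega> * indicator (Gs n) \<omega>)"
      using i1 i2 by (rule Bochner_Integration.integrable_add)
    fix \<omega> show "c * indicator (space M - Gs n) \<omega> \<le> c * indicator (space M - Gs n) \<omega> + Z n \<omega> * indicator (Gs n) \<omega>"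
      using Z_pos[of n \<omega>] by (auto simp: indicator_def)
  qed
  also have "\<dots> \<le> 1" using Psi_le by simp
  finally show ?thesis .
qed

end


lemma freedman:
  assumes x: "x > 0"
  shows "measure M {\<omega>\<in>space M. (\<exists>k\<in>{1..n}. x \<le> (\<Sum>i=1..k. \<xi> i \<omega>)) \<and> (\<forall>i\<in>{1..n}. \<xi> i \<omega> \<le> y)
            \<and> (\<Sum>i=1..n. cv i \<omega>) \<le> V} \<le> exp (- (lam * x - g * V))"
proof -
  define c where "c = exp (lam * x - g * V)"
  have c: "c > 0" by (simp add: c_def)
  have AE: "AE \<omega> in M. \<forall>i\<in>{1..n}. cv i \<omega> \<ge> 0" by (rule AE_finite_allI) (use cv_nonneg in auto)
  have "measure M {\<omega>\<in>space M. (\<exists>k\<in>{1..n}. x \<le> (\<Sum>i=1..k. \<xi> i \<omega>)) \<and> (\<forall>i\<in>{1..n}. \<xi> i \<omega> \<le> y)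
            \<and> (\<Sum>i=1..n. cv i \<omega>) \<le> V} \<le> measure M (space M - Gs c n)"
  proof (rule finite_measure_mono_AE)
    show "space M - Gs c n \<in> sets M" using Gs_setsM[OF c] by auto
    show "AE \<omega> in M. \<omega> \<in> {\<omega>\<in>space M. (\<exists>k\<in>{1..n}. x \<le> (\<Sum>i=1..k. \<xi> i \<omega>)) \<and> (\<forall>i\<in>{1..n}. \<xi> i \<omega> \<le> y)
            \<and> (\<Sum>i=1..n. cv i \<omega>) \<le> V} \<longrightarrow> \<omega> \<in> space M - Gs c n"
      using AE
    proof (rule AE_mp, intro AE_I2 impI)
      fix \<omega> assume w: "\<omega> \<in> space M" and nn: "\<forall>i\<in>{1..n}. cv i \<omega> \<ge> 0"
        and T: "\<omega> \<in> {\<omega>\<in>space M. (\<exists>k\<in>{1..n}. x \<le> (\<Sum>i=1..k. \<xi> i \<omega>)) \<and> (\<forall>i\<in>{1..n}. \<xi> i \<omega> \<le> y)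
            \<and> (\<Sum>i=1..n. cv i \<omega>) \<le> V}"
      then obtain k where k: "k \<in> {1..n}" "x \<le> (\<Sum>i=1..k. \<xi> i \<omega>)"
        and yy: "\<forall>i\<in>{1..n}. \<xi> i \<omega> \<le> y" and QV: "(\<Sum>i=1..n. cv i \<omega>) \<le> V" by auto
      have "(\<Sum>i=1..k. lam * eta i \<omega> - g * dv i \<omega>) = lam * (\<Sum>i=1..k. \<xi> i \<omega>) - g * (\<Sum>i=1..k. cv i \<omega>)"
        unfolding sum_distrib_left sum_subtractf[symmetric]
        by (rule sum.cong) (use k yy nn in \<open>auto simp: eta_def dv_def\<close>)
      also have "\<dots> \<ge> lam * x - g * V"
      proof -
        have "(\<Sum>i=1..k. cv i \<omega>) \<le> (\<Sum>i=1..n. cv i \<omega>)"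
          by (rule sum_mono2) (use k nn in auto)
        then have "g * (\<Sum>i=1..k. cv i \<omega>) \<le> g * V" using QV g by (intro mult_left_mono) auto
        moreover have "lam * x \<le> lam * (\<Sum>i=1..k. \<xi> i \<omega>)" using k lam by (intro mult_left_mono) auto
        ultimately show ?thesis by linarith
      qed
      finally have ck: "Z k \<omega> \<ge> c" unfolding Z_def c_def by simp
      show "\<omega> \<in> space M - Gs c n"
      proof
        show "\<omega> \<in> space M" using w .
        show "\<omega> \<notin> Gs c n"
        proof
          assume "\<omega> \<in> Gs c n"
          then have "Z k \<omega> < c" using k Gs_def[OF c, of n] by auto
          then show False using ck by simp
        qed
      qed
    qed
  qed
  also have "\<dots> \<le> 1 / c" using maximal[OF c] c by (simp add: field_simps mult.commute)
  also have "\<dots> = exp (- (lam * x - g * V))" unfolding c_def exp_minus by (simp add: inverse_eq_divide)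
  finally show ?thesis .
qed

end

end


theorem corollary2p3:
  fixes M :: "'a measure" and F :: "nat \<Rightarrow> 'a measure"
    and \<xi> :: "nat \<Rightarrow> 'a \<Rightarrow> real" and n :: nat and p \<delta> :: real
  assumes prob: "prob_space M"
    and n: "n \<ge> 1"
    and subalg: "\<And>i. i \<le> n \<Longrightarrow> subalgebra M (F i)"
    and F0: "sets (F 0) = {{}, space M}"
    and mono: "\<And>i. i < n \<Longrightarrow> sets (F i) \<subseteq> sets (F (Suc i))"
    and xi0: "\<xi> 0 = (\<lambda>\<omega>. 0)"
    and adapted: "\<And>i. i \<le> n \<Longrightarrow> \<xi> i \<in> borel_measurable (F i)"
    and integ: "\<And>i. i \<le> n \<Longrightarrow> integrable M (\<xi> i)"
    and mds: "\<And>i. 1 \<le> i \<Longrightarrow> i \<le> n \<Longrightarrow>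
               AE \<omega> in M. real_cond_exp M (F (i - 1)) (\<xi> i) \<omega> = 0"
    and p: "p \<ge> 2" and \<delta>: "\<delta> > 0"
    and moment: "\<And>i. 1 \<le> i \<Longrightarrow> i \<le> n \<Longrightarrow>
               integrable M (\<lambda>\<omega>. \<bar>\<xi> i \<omega>\<bar> powr (p + \<delta>))"
  defines "S \<equiv> (\<lambda>k \<omega>. \<Sum>i=1..k. \<xi> i \<omega>)"
    and "QV \<equiv> (\<lambda>\<omega>. \<Sum>i=1..n. real_cond_exp M (F (i - 1)) (\<lambda>\<omega>'. (\<xi> i \<omega>')\<^sup>2) \<omega>)"
  shows "(\<forall>x>0. \<forall>v>0.
           measure M {\<omega> \<in> space M. Max ((\<lambda>k. S k \<omega>) ` {1..n}) \<ge> x}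
             \<le> exp (- (x\<^sup>2 / (2 * (real n * v\<^sup>2 + (1/3) * x powr ((2*p + \<delta>) / (p + \<delta>))))))
               + (1 / x powr p) * (\<Sum>i=1..n. integral\<^sup>L M (\<lambda>\<omega>.
                    \<bar>\<xi> i \<omega>\<bar> powr (p + \<delta>) * indicator {\<omega>'. \<xi> i \<omega>' > x powr (p / (p + \<delta>))} \<omega>))
               + (1 / v powr (p + \<delta>)) * integral\<^sup>L M (\<lambda>\<omega>. \<bar>QV \<omega> / real n\<bar> powr ((p + \<delta>) / 2)))
         \<and> integral\<^sup>L M (\<lambda>\<omega>. \<bar>QV \<omega> / real n\<bar> powr ((p + \<delta>) / 2))
           \<le> (1 / real n) * (\<Sum>i=1..n. integral\<^sup>L M (\<lambda>\<omega>. \<bar>\<xi> i \<omega>\<bar> powr (p + \<delta>)))"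
  proof -
  interpret prob_space M by (rule prob)
  define r where "r = p + \<delta>"
  define q where "q = r / 2"
  have r2: "r > 2" using p \<delta> by (simp add: r_def)
  have q1: "q \<ge> 1" using r2 by (simp add: q_def)
  have r2q: "2 * q = r" by (simp add: q_def)
  have xiM: "\<xi> i \<in> borel_measurable M" if "i \<le> n" for i
    using measurable_from_subalg[OF subalg adapted] that by blast
  have sq: "integrable M (\<lambda>\<omega>. (\<xi> i \<omega>)\<^sup>2)" if i: "1 \<le> i" "i \<le> n" for i
  proof (rule Bochner_Integration.integrable_bound[where f="\<lambda>\<omega>. 1 + \<bar>\<xi> i \<omega>\<bar> powr (p + \<delta>)"])
    show "integrable M (\<lambda>\<omega>. 1 + \<bar>\<xi> i \<omega>\<bar> powr (p + \<delta>))" using moment[OF i] by auto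
    have [measurable]: "\<xi> i \<in> borel_measurable M" using xiM i by auto
    show "(\<lambda>\<omega>. (\<xi> i \<omega>)\<^sup>2) \<in> borel_measurable M" by measurable
    show "AE \<omega> in M. norm ((\<xi> i \<omega>)\<^sup>2) \<le> norm (1 + \<bar>\<xi> i \<omega>\<bar> powr (p + \<delta>))"
    proof (rule AE_I2)
      fix \<omega>
      have "(\<xi> i \<omega>)\<^sup>2 \<le> 1 + \<bar>\<xi> i \<omega>\<bar> powr (p + \<delta>)"
      proof (cases "\<bar>\<xi> i \<omega>\<bar> \<le> 1")
        case True
        then have "(\<xi> i \<omega>)\<^sup>2 \<le> 1" by (simp add: abs_le_square_iff[symmetric] abs_square_le_1)
        then show ?thesis by (smt (verit) powr_ge_zero)
      next
        case False
        then have "(\<xi> i \<omega>)\<^sup>2 = \<bar>\<xi> i \<omega>\<bar> powr 2" by (simp add: powr_realpow[symmetric] power_abs)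
        also have "\<dots> \<le> \<bar>\<xi> i \<omega>\<bar> powr (p + \<delta>)" using False p \<delta> by (intro powr_mono) auto
        finally show ?thesis by simp
      qed
      then show "norm ((\<xi> i \<omega>)\<^sup>2) \<le> norm (1 + \<bar>\<xi> i \<omega>\<bar> powr (p + \<delta>))" by simp
    qed
  qed
  interpret md: mdsetup M F \<xi> n
    by unfold_locales (use subalg mono adapted integ sq mds in auto)
  have QVcv: "QV = (\<lambda>\<omega>. \<Sum>i=1..n. md.cv i \<omega>)" unfolding QV_def md.cv_def by simp
  have mom2: "integrable M (\<lambda>\<omega>. \<bar>\<xi> i \<omega>\<bar> powr (2*q))" if "1 \<le> i" "i \<le> n" for i
    using moment[OF that] by (simp add: r2q r_def)
  have QVint: "integrable M (\<lambda>\<omega>. \<bar>QV \<omega> / real n\<bar> powr ((p + \<delta>) / 2))"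
    using md.QV_moment(1)[OF n q1 mom2] unfolding QVcv q_def r_def .
  have part2: "integral\<^sup>L M (\<lambda>\<omega>. \<bar>QV \<omega> / real n\<bar> powr ((p + \<delta>) / 2))
           \<le> (1 / real n) * (\<Sum>i=1..n. integral\<^sup>L M (\<lambda>\<omega>. \<bar>\<xi> i \<omega>\<bar> powr (p + \<delta>)))"
    using md.QV_moment(2)[OF n q1 mom2] unfolding r2q QVcv unfolding q_def r_def .
  have part1: "measure M {\<omega> \<in> space M. Max ((\<lambda>k. S k \<omega>) ` {1..n}) \<ge> x}
             \<le> exp (- (x\<^sup>2 / (2 * (real n * v\<^sup>2 + (1/3) * x powr ((2*p + \<delta>) / (p + \<delta>))))))
               + (1 / x powr p) * (\<Sum>i=1..n. integral\<^sup>L M (\<lambda>\<omega>.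
                    \<bar>\<xi> i \<omega>\<bar> powr (p + \<delta>) * indicator {\<omega>'. \<xi> i \<omega>' > x powr (p / (p + \<delta>))} \<omega>))
               + (1 / v powr (p + \<delta>)) * integral\<^sup>L M (\<lambda>\<omega>. \<bar>QV \<omega> / real n\<bar> powr ((p + \<delta>) / 2))"
    if x: "x > 0" and v: "v > 0" for x v
  proof -
    define y where "y = x powr (p / (p + \<delta>))"
    define V where "V = real n * v\<^sup>2"
    define D where "D = V + x * y / 3"
    define lam where "lam = x / D"
    define g where "g = lam\<^sup>2 / (2 * (1 - lam * y / 3))"
    have y: "y > 0" using x by (simp add: y_def)
    have V: "V > 0" using v n by (simp add: V_def)
    have D: "D > 0" using mult_pos_pos[OF x y] V by (simp add: D_def)
    have lam: "lam > 0" using x D by (simp add: lam_def)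
    have ly3: "lam * y < 3"
    proof -
      have "x * y < 3 * D" using V by (simp add: D_def)
      then have "x * y / D < 3" using D by (simp add: field_simps)
      then show ?thesis by (simp add: lam_def)
    qed
    have g: "g \<ge> 0" using ly3 by (simp add: g_def)
    have expb: "exp (lam * t) \<le> 1 + lam * t + g * t\<^sup>2" if "t \<le> y" for t
    proof -
      have "exp (lam * t) \<le> 1 + lam * t + (lam * t)\<^sup>2 / (2 * (1 - lam * y / 3))"
        by (rule exp_bern) (use that lam y ly3 in \<open>auto intro: mult_left_mono\<close>)
      also have "(lam * t)\<^sup>2 / (2 * (1 - lam * y / 3)) = g * t\<^sup>2"
        by (simp add: g_def power_mult_distrib)
      finally show ?thesis .
    qed
    have fr: "measure M {\<omega>\<in>space M. (\<exists>k\<in>{1..n}. x \<le> (\<Sum>i=1..k. \<xi> i \<omega>)) \<and> (\<forall>i\<in>{1..n}. \<xi> i \<omega> \<le> y)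
            \<and> (\<Sum>i=1..n. md.cv i \<omega>) \<le> V} \<le> exp (- (lam * x - g * V))"
      by (rule md.freedman[OF lam y g expb x])
    have xy: "x powr ((2*p + \<delta>) / (p + \<delta>)) = x * y"
    proof -
      have "(2*p + \<delta>) / (p + \<delta>) = 1 + p / (p + \<delta>)" using p \<delta> by (simp add: field_simps)
      then show ?thesis using x by (simp add: y_def powr_add)
    qed
    have expeq: "lam * x - g * V = x\<^sup>2 / (2 * (real n * v\<^sup>2 + (1/3) * x powr ((2*p + \<delta>) / (p + \<delta>))))"
    proof -
      have e1: "1 - lam * y / 3 = V / D" using D by (simp add: lam_def D_def field_simps)
      have "g = x\<^sup>2 / (2 * V * D)" using D V unfolding g_def e1 by (simp add: lam_def field_simps power2_eq_square)
      then have "lam * x - g * V = x\<^sup>2 / (2 * D)" using D V by (simp add: lam_def field_simps power2_eq_square)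
      then show ?thesis unfolding xy D_def V_def by (simp add: field_simps)
    qed
    have xiMi: "\<xi> i \<in> borel_measurable M" if "i \<in> {1..n}" for i using xiM that by auto
    have SkM: "(\<lambda>\<omega>. \<Sum>i=1..k. \<xi> i \<omega>) \<in> borel_measurable M" if "k \<in> {1..n}" for k
      by (rule borel_measurable_sum) (use xiM that in auto)
    have cvM: "md.cv i \<in> borel_measurable M" if "i \<in> {1..n}" for i using md.cv_int that by auto
    have QVM[measurable]: "QV \<in> borel_measurable M" unfolding QVcv
      by (rule borel_measurable_sum) (use cvM in auto)
    define T where "T = {\<omega>\<in>space M. (\<exists>k\<in>{1..n}. x \<le> (\<Sum>i=1..k. \<xi> i \<omega>)) \<and> (\<forall>i\<in>{1..n}. \<xi> i \<omega> \<le> y)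
            \<and> (\<Sum>i=1..n. md.cv i \<omega>) \<le> V}"
    define B where "B = (\<Union>i\<in>{1..n}. {\<omega>\<in>space M. y < \<xi> i \<omega>})"
    define C where "C = {\<omega>\<in>space M. v powr (p + \<delta>) \<le> \<bar>QV \<omega> / real n\<bar> powr ((p + \<delta>) / 2)}"
    have Bi: "{\<omega>\<in>space M. y < \<xi> i \<omega>} \<in> sets M" if "i \<in> {1..n}" for i
    proof -
      have [measurable]: "\<xi> i \<in> borel_measurable M" using xiMi that .
      show ?thesis by measurable
    qed
    have BM: "B \<in> sets M" unfolding B_def using Bi by auto
    have CM: "C \<in> sets M" unfolding C_def by measurable
    have TM: "T \<in> sets M"
    proof -
      have "Measurable.pred M (\<lambda>\<omega>. \<exists>k\<in>{1..n}. x \<le> (\<Sum>i=1..k. \<xi> i \<omega>))"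
      proof (rule pred_intros_finite)
        fix k assume "k \<in> {1..n}"
        then have [measurable]: "(\<lambda>\<omega>. \<Sum>i=1..k. \<xi> i \<omega>) \<in> borel_measurable M" using SkM by auto
        show "Measurable.pred M (\<lambda>\<omega>. x \<le> (\<Sum>i=1..k. \<xi> i \<omega>))" by measurable
      qed auto
      moreover have "Measurable.pred M (\<lambda>\<omega>. \<forall>i\<in>{1..n}. \<xi> i \<omega> \<le> y)"
      proof (rule pred_intros_finite)
        fix i assume "i \<in> {1..n}"
        then have [measurable]: "\<xi> i \<in> borel_measurable M" using xiMi by auto
        show "Measurable.pred M (\<lambda>\<omega>. \<xi> i \<omega> \<le> y)" by measurable
      qed auto
      moreover have "Measurable.pred M (\<lambda>\<omega>. (\<Sum>i=1..n. md.cv i \<omega>) \<le> V)"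
        using QVM unfolding QVcv by measurable
      ultimately have "Measurable.pred M (\<lambda>\<omega>. (\<exists>k\<in>{1..n}. x \<le> (\<Sum>i=1..k. \<xi> i \<omega>)) \<and> (\<forall>i\<in>{1..n}. \<xi> i \<omega> \<le> y)
            \<and> (\<Sum>i=1..n. md.cv i \<omega>) \<le> V)" by measurable
      then show ?thesis unfolding T_def pred_def .
    qed
    have sub: "{\<omega> \<in> space M. Max ((\<lambda>k. S k \<omega>) ` {1..n}) \<ge> x} \<subseteq> T \<union> B \<union> C"
    proof
      fix \<omega> assume w: "\<omega> \<in> {\<omega> \<in> space M. Max ((\<lambda>k. S k \<omega>) ` {1..n}) \<ge> x}"
      then have ws: "\<omega> \<in> space M" and wm: "x \<le> Max ((\<lambda>k. S k \<omega>) ` {1..n})" by auto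
      have "\<exists>a\<in>(\<lambda>k. S k \<omega>) ` {1..n}. x \<le> a"
        using wm Max_ge_iff[of "(\<lambda>k. S k \<omega>) ` {1..n}" x] n by simp
      then obtain k where k: "k \<in> {1..n}" "x \<le> S k \<omega>" by blast
      have ex: "\<exists>k\<in>{1..n}. x \<le> (\<Sum>i=1..k. \<xi> i \<omega>)" using k unfolding S_def by blast
      show "\<omega> \<in> T \<union> B \<union> C"
      proof (cases "\<omega> \<in> B \<or> \<omega> \<in> C")
        case True then show ?thesis by blast
      next
        case False
        then have nB: "\<omega> \<notin> B" and nC: "\<omega> \<notin> C" by auto
        have yy: "\<forall>i\<in>{1..n}. \<xi> i \<omega> \<le> y"
        proof
          fix i assume i: "i \<in> {1..n}"
          show "\<xi> i \<omega> \<le> y"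
          proof (rule ccontr)
            assume "\<not> \<xi> i \<omega> \<le> y"
            then have "\<omega> \<in> {\<omega>\<in>space M. y < \<xi> i \<omega>}" using ws by simp
            then have "\<omega> \<in> B" unfolding B_def using i by blast
            then show False using nB by blast
          qed
        qed
        have lt: "\<bar>QV \<omega> / real n\<bar> powr ((p + \<delta>) / 2) < v powr (p + \<delta>)"
        proof (rule ccontr)
          assume "\<not> ?thesis"
          then have "\<omega> \<in> C" unfolding C_def using ws by simp
          then show False using nC by blast
        qed
        have vv: "v powr (p + \<delta>) = (v\<^sup>2) powr ((p + \<delta>) / 2)"
        proof -
          have "(v\<^sup>2) powr ((p + \<delta>) / 2) = (v powr 2) powr ((p + \<delta>) / 2)"
            using v by (simp add: powr_realpow)
          also have "\<dots> = v powr (2 * ((p + \<delta>) / 2))" by (rule powr_powr)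
          also have "2 * ((p + \<delta>) / 2) = p + \<delta>" by simp
          finally show ?thesis by simp
        qed
        have "\<bar>QV \<omega> / real n\<bar> < v\<^sup>2"
        proof (cases "\<bar>QV \<omega> / real n\<bar> = 0")
          case True
          have "0 < v\<^sup>2" using v by simp
          then show ?thesis using True by linarith
        next
          case False
          show ?thesis
            by (rule powr_less_cancel2[of "(p + \<delta>) / 2"]) (use p \<delta> v False lt vv in auto)
        qed
        then have "QV \<omega> / real n < v\<^sup>2" by linarith
        then have "QV \<omega> < V" using n by (simp add: V_def field_simps)
        then have "(\<Sum>i=1..n. md.cv i \<omega>) \<le> V" unfolding QVcv by simp
        then have "\<omega> \<in> T" using ex yy ws unfolding T_def by blast
        then show ?thesis by blast
      qed
    qed
    have mA: "measure M {\<omega> \<in> space M. Max ((\<lambda>k. S k \<omega>) ` {1..n}) \<ge> x} \<le> measure M T + measure M B + measure M C"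
    proof -
      have "measure M {\<omega> \<in> space M. Max ((\<lambda>k. S k \<omega>) ` {1..n}) \<ge> x} \<le> measure M (T \<union> B \<union> C)"
        by (rule finite_measure_mono[OF sub]) (use TM BM CM in auto)
      also have "\<dots> \<le> measure M (T \<union> B) + measure M C" by (rule measure_Un_le) (use TM BM CM in auto)
      also have "measure M (T \<union> B) \<le> measure M T + measure M B" by (rule measure_Un_le) (use TM BM in auto)
      finally show ?thesis by simp
    qed
    have mT: "measure M T \<le> exp (- (x\<^sup>2 / (2 * (real n * v\<^sup>2 + (1/3) * x powr ((2*p + \<delta>) / (p + \<delta>))))))"
      using fr unfolding T_def expeq .
    have mC: "measure M C \<le> (1 / v powr (p + \<delta>)) * integral\<^sup>L M (\<lambda>\<omega>. \<bar>QV \<omega> / real n\<bar> powr ((p + \<delta>) / 2))"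
    proof -
      have "measure M C \<le> integral\<^sup>L M (\<lambda>\<omega>. \<bar>QV \<omega> / real n\<bar> powr ((p + \<delta>) / 2)) / v powr (p + \<delta>)"
        unfolding C_def by (rule integral_Markov_inequality_measure[OF QVint, of "space M"]) (use v in auto)
      then show ?thesis by simp
    qed
    define u where "u i \<omega> = \<bar>\<xi> i \<omega>\<bar> powr (p + \<delta>) * indicator {\<omega>'. \<xi> i \<omega>' > y} \<omega>" for i \<omega>
    have mBi: "measure M {\<omega>\<in>space M. y < \<xi> i \<omega>} \<le> integral\<^sup>L M (u i) / x powr p" if i: "i \<in> {1..n}" for i
    proof -
      have [measurable]: "\<xi> i \<in> borel_measurable M" using xiMi i .
      have ueq: "u i = (\<lambda>\<omega>. \<bar>\<xi> i \<omega>\<bar> powr (p + \<delta>) * (if y < \<xi> i \<omega> then 1 else 0))"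
        by (auto simp: u_def fun_eq_iff indicator_def)
      have uM: "u i \<in> borel_measurable M" unfolding ueq by measurable
      have uint: "integrable M (u i)"
      proof (rule Bochner_Integration.integrable_bound[OF moment uM])
        show "1 \<le> i" "i \<le> n" using i by auto
        show "AE \<omega> in M. norm (u i \<omega>) \<le> norm (\<bar>\<xi> i \<omega>\<bar> powr (p + \<delta>))"
          by (rule AE_I2) (auto simp: u_def indicator_def)
      qed
      have ypow: "y powr (p + \<delta>) = x powr p"
      proof -
        have "y powr (p + \<delta>) = x powr (p / (p + \<delta>) * (p + \<delta>))" by (simp add: y_def powr_powr)
        also have "p / (p + \<delta>) * (p + \<delta>) = p" using p \<delta> by simp
        finally show ?thesis .
      qed
      have "measure M {\<omega>\<in>space M. y < \<xi> i \<omega>} \<le> measure M {\<omega>\<in>space M. x powr p \<le> u i \<omega>}"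
      proof (rule finite_measure_mono)
        show "{\<omega>\<in>space M. x powr p \<le> u i \<omega>} \<in> sets M" using uM by measurable
        show "{\<omega>\<in>space M. y < \<xi> i \<omega>} \<subseteq> {\<omega>\<in>space M. x powr p \<le> u i \<omega>}"
        proof safe
          fix \<omega> assume "\<omega> \<in> space M" "y < \<xi> i \<omega>"
          then have "y powr (p + \<delta>) \<le> \<bar>\<xi> i \<omega>\<bar> powr (p + \<delta>)"
            using y p \<delta> by (intro powr_mono2) auto
          then show "x powr p \<le> u i \<omega>" using \<open>y < \<xi> i \<omega>\<close> ypow by (simp add: u_def)
        qed
      qed
      also have "\<dots> \<le> integral\<^sup>L M (u i) / x powr p"
        by (rule integral_Markov_inequality_measure[OF uint, of "space M"]) (use x in \<open>auto simp: u_def\<close>)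
      finally show ?thesis .
    qed
    have mB: "measure M B \<le> (1 / x powr p) * (\<Sum>i=1..n. integral\<^sup>L M (u i))"
    proof -
      have "measure M B \<le> (\<Sum>i=1..n. measure M {\<omega>\<in>space M. y < \<xi> i \<omega>})"
        unfolding B_def by (rule measure_UNION_le) (use Bi in auto)
      also have "\<dots> \<le> (\<Sum>i=1..n. integral\<^sup>L M (u i) / x powr p)"
        by (rule sum_mono) (use mBi in auto)
      also have "\<dots> = (1 / x powr p) * (\<Sum>i=1..n. integral\<^sup>L M (u i))"
        by (simp add: sum_divide_distrib)
      finally show ?thesis .
    qed
    have "measure M {\<omega> \<in> space M. Max ((\<lambda>k. S k \<omega>) ` {1..n}) \<ge> x}
        \<le> exp (- (x\<^sup>2 / (2 * (real n * v\<^sup>2 + (1/3) * x powr ((2*p + \<delta>) / (p + \<delta>))))))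
         + (1 / x powr p) * (\<Sum>i=1..n. integral\<^sup>L M (u i))
         + (1 / v powr (p + \<delta>)) * integral\<^sup>L M (\<lambda>\<omega>. \<bar>QV \<omega> / real n\<bar> powr ((p + \<delta>) / 2))"
      using mA mT mB mC by linarith
    then show ?thesis unfolding u_def y_def .
  qed
  show ?thesis using part1 part2 by blast
qed


end
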